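(* Let $\mathcal Z,\mathcal S$ be finite, $f:\mathcal Z\times\mathcal S\to\mathbb R$, and $(Z_i,S_i)$, $i=1,\dots,n$, random variables with a common joint law $P_{ZS}$ (not depending on $i$) such that $\Pr[\mathbf S=\mathbf s\mid\mathbf Z=\mathbf z]=\prod_{i=1}^n\Pr[S_i=s_i\mid Z_i=z_i]$. Let $P_{S|Z}$ be the conditional of $P_{ZS}$. Then for every type $p$ with $\Pr[\hat p_{\mathbf Z}=p]>0$, $$\operatorname{Var}\Big[\sum_{i=1}^n f(Z_i,S_i)\ \Big|\ \hat p_{\mathbf Z}=p\Big]=n\,\mathbb E_{p}\Big[\operatorname{Var}_{P_{S|Z}}[f(\tilde Z,S)\mid\tilde Z]\Big],$$ where $\tilde Z\sim p$ and, given $\tilde Z$, $S\sim P_{S|Z}(\cdot|\tilde Z)$.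
   Context: $\mathbf Z=(Z_1,\dots,Z_n)$, $\mathbf S=(S_1,\dots,S_n)$; $\hat p_{\mathbf Z}$ is the empirical distribution (type) of $\mathbf Z$. *)

theory Defs
  imports "HOL-Probability.Probability"
begin

definition emp_type :: "'z list \<Rightarrow> 'z \<Rightarrow> real" where
  "emp_type zs a = real (length (filter (\<lambda>x. x = a) zs)) / real (length zs)"

definition cond_S_given_Z :: "('z \<times> 's) pmf \<Rightarrow> 'z \<Rightarrow> 's pmf" where
  "cond_S_given_Z P a = map_pmf snd (cond_pmf P {x. fst x = a})"

end

theory Submission
  imports Defs
begin

lemma sum_len_Suc:
  fixes G :: "'a::finite list \<Rightarrow> real"
  shows "(\<Sum>ss\<in>{ss. length ss = Suc k}. G ss) = (\<Sum>s\<in>UNIV. \<Sum>ss\<in>{ss. length ss = k}. G (s # ss))"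
proof -
  have fin: "finite {ss::'a list. length ss = k}"
    by (rule finite_subset[OF _ finite_lists_length_eq[of "UNIV::'a set" k]]) auto
  have img: "{ss. length ss = Suc k} = (\<lambda>(s,ss). s # ss) ` (UNIV \<times> {ss::'a list. length ss = k})"
    by (auto simp: length_Suc_conv image_iff)
  have inj: "inj_on (\<lambda>(s,ss). s # (ss::'a list)) (UNIV \<times> {ss. length ss = k})"
    by (auto simp: inj_on_def)
  show ?thesis
    unfolding img using fin
    by (subst sum.reindex[OF inj]) (simp add: sum.cartesian_product case_prod_unfold)
qed

lemma prod_nth_map2:
  "length ss = length zs \<Longrightarrow> (\<Prod>i<length zs. (Q (zs!i) (ss!i)::real)) = prod_list (map2 Q zs ss)"
proof (induction zs arbitrary: ss)
  case Nil then show ?case by simp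
next
  case (Cons z zs)
  then obtain s ss' where "ss = s # ss'" "length ss' = length zs" by (cases ss) auto
  with Cons show ?case by (simp only: length_Cons prod.lessThan_Suc_shift) simp
qed

lemma sum_nth_map:
  "(\<Sum>i<length xs. (f (xs!i)::real)) = sum_list (map f xs)"
proof (induction xs)
  case Nil then show ?case by simp
next
  case (Cons z zs)
  then show ?case by (simp only: length_Cons sum.lessThan_Suc_shift) simp
qed

definition EE :: "('z \<Rightarrow> 's pmf) \<Rightarrow> 'z list \<Rightarrow> ('s list \<Rightarrow> real) \<Rightarrow> real" where
  "EE D zs F = (\<Sum>ss\<in>{ss. length ss = length zs}. prod_list (map2 (\<lambda>a s. pmf (D a) s) zs ss) * F ss)"

lemma EE_Cons:
  fixes D :: "'z \<Rightarrow> ('s::finite) pmf"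
  shows "EE D (z # zs) F = (\<Sum>s\<in>UNIV. pmf (D z) s * EE D zs (\<lambda>ss. F (s # ss)))"
  unfolding EE_def by (simp add: sum_len_Suc sum_distrib_left mult.assoc)

lemma EE_lin:
  "EE D zs (\<lambda>ss. a * F ss + b * G ss) = a * EE D zs F + b * EE D zs G"
  unfolding EE_def by (simp add: sum.distrib sum_distrib_left algebra_simps)

lemma EE_lin3:
  "EE D zs (\<lambda>ss. a * F ss + b * G ss + c * H ss) = a * EE D zs F + b * EE D zs G + c * EE D zs H"
  unfolding EE_def by (simp add: sum.distrib sum_distrib_left algebra_simps)

lemma EE_one: "EE (D::'z \<Rightarrow> ('s::finite) pmf) zs (\<lambda>_. 1) = 1"
proof (induction zs)
  case Nil then show ?case by (simp add: EE_def)
next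
  case (Cons z zs)
  then show ?case by (simp add: EE_Cons sum_pmf_eq_1)
qed

lemma EE_const: "EE (D::'z \<Rightarrow> ('s::finite) pmf) zs (\<lambda>_. c) = c"
  using EE_lin[of D zs c "\<lambda>_. 1" 0 "\<lambda>_. 1"] by (simp add: EE_one)

lemma EE_sum:
  fixes D :: "'z \<Rightarrow> ('s::finite) pmf"
  assumes "\<And>a. (\<Sum>s\<in>UNIV. pmf (D a) s * h a s) = 0"
  shows "EE D zs (\<lambda>ss. sum_list (map2 h zs ss)) = 0"
proof (induction zs)
  case Nil then show ?case by (simp add: EE_def)
next
  case (Cons z zs)
  have "EE D (z # zs) (\<lambda>ss. sum_list (map2 h (z#zs) ss))
     = (\<Sum>s\<in>UNIV. pmf (D z) s * EE D zs (\<lambda>ss. 1 * h z s + 1 * sum_list (map2 h zs ss)))"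
    by (simp add: EE_Cons)
  also have "\<dots> = (\<Sum>s\<in>UNIV. pmf (D z) s * h z s)"
    by (simp only: EE_lin EE_const Cons) simp
  finally show ?case using assms by simp
qed

lemma EE_sq:
  fixes D :: "'z \<Rightarrow> ('s::finite) pmf"
  assumes c: "\<And>a. (\<Sum>s\<in>UNIV. pmf (D a) s * h a s) = 0"
  shows "EE D zs (\<lambda>ss. (sum_list (map2 h zs ss))^2) = sum_list (map (\<lambda>a. \<Sum>s\<in>UNIV. pmf (D a) s * (h a s)^2) zs)"
proof (induction zs)
  case Nil then show ?case by (simp add: EE_def)
next
  case (Cons z zs)
  have "EE D (z # zs) (\<lambda>ss. (sum_list (map2 h (z#zs) ss))^2)
     = (\<Sum>s\<in>UNIV. pmf (D z) s * EE D zs (\<lambda>ss. (h z s)^2 * 1 + (2 * h z s) * sum_list (map2 h zs ss)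
          + 1 * (sum_list (map2 h zs ss))^2))"
    by (simp add: EE_Cons power2_eq_square algebra_simps)
  also have "\<dots> = (\<Sum>s\<in>UNIV. pmf (D z) s * ((h z s)^2 + EE D zs (\<lambda>ss. (sum_list (map2 h zs ss))^2)))"
    by (simp only: EE_lin3 EE_one EE_sum[OF c]) simp
  also have "\<dots> = (\<Sum>s\<in>UNIV. pmf (D z) s * (h z s)^2) + EE D zs (\<lambda>ss. (sum_list (map2 h zs ss))^2)"
    by (simp add: distrib_left sum.distrib flip: sum_distrib_right) (simp add: sum_pmf_eq_1)
  finally show ?case using Cons by simp
qed


lemma pmf_cond_S:
  fixes P :: "(('z::finite) \<times> ('s::finite)) pmf"
  assumes "measure P {x. fst x = a} > 0"
  shows "pmf (cond_S_given_Z P a) s = pmf P (a,s) / measure P {x. fst x = a}"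
proof -
  let ?B = "{x::'z\<times>'s. fst x = a}"
  have ne: "set_pmf P \<inter> ?B \<noteq> {}" using assms measure_pmf_zero_iff[of P ?B] by auto
  have "pmf (cond_S_given_Z P a) s = measure (cond_pmf P ?B) (snd -` {s})"
    unfolding cond_S_given_Z_def by (simp add: pmf_map)
  also have "\<dots> = (\<Sum>x\<in>snd -` {s}. if x \<in> ?B then pmf P x / measure P ?B else 0)"
    by (simp add: measure_measure_pmf_finite pmf_cond[OF ne])
  also have "\<dots> = sum (\<lambda>x. pmf P x / measure P ?B) (snd -` {s} \<inter> ?B)"
    by (simp add: sum.inter_restrict)
  also have "snd -` {s} \<inter> ?B = {(a,s)}" by auto
  finally show ?thesis by simp
qed

lemma sum_list_count:
  "sum_list (map (W::'z::finite \<Rightarrow> real) zs) = (\<Sum>a\<in>UNIV. real (length (filter (\<lambda>x. x = a) zs)) * W a)"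
proof (induction zs)
  case Nil then show ?case by simp
next
  case (Cons z zs)
  have "(\<Sum>a\<in>UNIV. real (length (filter (\<lambda>x. x = a) (z#zs))) * W a)
      = (\<Sum>a\<in>UNIV. (if z = a then W a else 0) + real (length (filter (\<lambda>x. x = a) zs)) * W a)"
    by (intro sum.cong) (auto simp: algebra_simps)
  also have "\<dots> = W z + (\<Sum>a\<in>UNIV. real (length (filter (\<lambda>x. x = a) zs)) * W a)"
    by (simp add: sum.distrib)
  finally show ?case using Cons by simp
qed

lemma sum_list_type:
  fixes zs :: "('z::finite) list"
  assumes "length zs = n" "emp_type zs = p"
  shows "sum_list (map (W::'z \<Rightarrow> real) zs) = real n * (\<Sum>a\<in>UNIV. p a * W a)"
proof (cases "n = 0")
  case True then show ?thesis using assms by simp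
next
  case False
  have "real n * (\<Sum>a\<in>UNIV. p a * W a) = (\<Sum>a\<in>UNIV. real (length (filter (\<lambda>x. x = a) zs)) * W a)"
    unfolding sum_distrib_left
    by (intro sum.cong) (use False assms in \<open>auto simp: emp_type_def\<close>)
  then show ?thesis by (simp add: sum_list_count)
qed

lemma sum_list_split:
  "length ss = length zs \<Longrightarrow> sum_list (map f (zip zs ss)) = sum_list (map2 (\<lambda>a s. f (a,s) - m a) zs ss) + sum_list (map (m::_\<Rightarrow>real) zs)"
proof (induction zs arbitrary: ss)
  case Nil then show ?case by simp
next
  case (Cons z zs)
  then obtain s ss' where "ss = s # ss'" "length ss' = length zs" by (cases ss) auto
  with Cons show ?case by simp
qed


theorem corollary4:
  fixes M :: "(('z::finite) \<times> ('s::finite)) list pmf"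
    and PZS :: "('z \<times> 's) pmf"
    and f :: "'z \<times> 's \<Rightarrow> real"
    and n :: nat
    and p :: "'z \<Rightarrow> real"
  assumes len: "\<forall>xs\<in>set_pmf M. length xs = n"
    and common_law: "\<forall>i<n. map_pmf (\<lambda>xs. xs ! i) M = PZS"
    and cond_indep: "\<forall>zs ss. length zs = n \<longrightarrow> length ss = n \<longrightarrow>
        measure_pmf.prob M {xs. map fst xs = zs} > 0 \<longrightarrow>
        measure_pmf.prob M {xs. map snd xs = ss \<and> map fst xs = zs}
          / measure_pmf.prob M {xs. map fst xs = zs}
        = (\<Prod>i<n. measure_pmf.prob M {xs. xs ! i = (zs ! i, ss ! i)}
                    / measure_pmf.prob M {xs. fst (xs ! i) = zs ! i})"
    and pos: "measure_pmf.prob M {xs. emp_type (map fst xs) = p} > 0"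
  shows "measure_pmf.variance (cond_pmf M {xs. emp_type (map fst xs) = p})
           (\<lambda>xs. \<Sum>i<n. f (xs ! i))
         = real n * (\<Sum>a\<in>UNIV. p a *
             measure_pmf.variance (cond_S_given_Z PZS a) (\<lambda>s. f (a, s)))"
proof -
  define A where "A = {xs::('z\<times>'s) list. emp_type (map fst xs) = p}"
  define N where "N = cond_pmf M A"
  define L where "L = {xs::('z\<times>'s) list. length xs = n}"
  define Lz where "Lz = {zs::'z list. length zs = n}"
  define Ls where "Ls = {ss::'s list. length ss = n}"
  define PZ where "PZ zs = measure M {xs. map fst xs = zs}" for zs
  define PA where "PA = measure M A"
  define D where "D = cond_S_given_Z PZS"
  have finL: "finite L" unfolding L_def
    by (rule finite_subset[OF _ finite_lists_length_eq[of "UNIV::('z\<times>'s) set" n]]) auto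
  have finLz: "finite Lz" unfolding Lz_def
    by (rule finite_subset[OF _ finite_lists_length_eq[of "UNIV::'z set" n]]) auto
  have finLs: "finite Ls" unfolding Ls_def
    by (rule finite_subset[OF _ finite_lists_length_eq[of "UNIV::'s set" n]]) auto
  have supp: "set_pmf M \<subseteq> L" using len unfolding L_def by auto
  have PApos: "PA > 0" using pos unfolding PA_def A_def .
  have neA: "set_pmf M \<inter> A \<noteq> {}" using PApos measure_pmf_zero_iff[of M A] unfolding PA_def by auto
  have PZi: "measure M {xs. fst (xs!i) = a} = measure PZS {x. fst x = a}" if "i < n" for i a
  proof -
    have "measure PZS {x. fst x = a} = measure (map_pmf (\<lambda>xs. xs ! i) M) {x. fst x = a}"
      using common_law that by simp
    also have "\<dots> = measure M {xs. fst (xs!i) = a}" by (simp add: vimage_def)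
    finally show ?thesis by simp
  qed
  have Pi: "measure M {xs. xs!i = (a,s)} = pmf PZS (a,s)" if "i < n" for i a s
  proof -
    have "pmf PZS (a,s) = measure (map_pmf (\<lambda>xs. xs ! i) M) {(a,s)}"
      using common_law that by (simp add: measure_pmf_single)
    also have "\<dots> = measure M {xs. xs!i = (a,s)}" by (simp add: vimage_def)
    finally show ?thesis by simp
  qed
  have fact: "pmf M (zip zs ss) = PZ zs * prod_list (map2 (\<lambda>a s. pmf (D a) s) zs ss)"
    if zs: "zs \<in> Lz" and ss: "ss \<in> Ls" and PZpos: "PZ zs > 0" for zs ss
  proof -
    have lz: "length zs = n" and ls: "length ss = n" using zs ss unfolding Lz_def Ls_def by auto
    have set1: "{xs. map snd xs = ss \<and> map fst xs = zs} = {zip zs ss}"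
      using lz ls by (auto simp: zip_map_fst_snd[symmetric])
    have factor: "measure M {xs. xs ! i = (zs ! i, ss ! i)} / measure M {xs. fst (xs ! i) = zs ! i}
        = pmf (D (zs!i)) (ss!i)" if "i < n" for i
    proof -
      have "PZ zs \<le> measure M {xs. fst (xs ! i) = zs ! i}"
        unfolding PZ_def using that lz
        by (intro measure_pmf.finite_measure_mono) auto
      then have "measure PZS {x. fst x = zs!i} > 0" using PZpos PZi[OF that] by simp
      then show ?thesis using PZi[OF that] Pi[OF that] by (simp add: D_def pmf_cond_S)
    qed
    have "pmf M (zip zs ss) / PZ zs = (\<Prod>i<n. pmf (D (zs!i)) (ss!i))"
    proof -
      have "pmf M (zip zs ss) / PZ zs = (\<Prod>i<n. measure M {xs. xs ! i = (zs ! i, ss ! i)}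
                    / measure M {xs. fst (xs ! i) = zs ! i})"
      proof -
        have "measure M {xs. map snd xs = ss \<and> map fst xs = zs} / PZ zs = (\<Prod>i<n. measure M {xs. xs ! i = (zs ! i, ss ! i)}
                    / measure M {xs. fst (xs ! i) = zs ! i})"
          using cond_indep lz ls PZpos unfolding PZ_def by blast
        then show ?thesis unfolding set1 measure_pmf_single .
      qed
      also have "\<dots> = (\<Prod>i<n. pmf (D (zs!i)) (ss!i))"
        using factor by (intro prod.cong) auto
      finally show ?thesis .
    qed
    also have "\<dots> = prod_list (map2 (\<lambda>a s. pmf (D a) s) zs ss)"
      using prod_nth_map2[of ss zs "\<lambda>a s. pmf (D a) s"] lz ls by simp
    finally show ?thesis using PZpos by (simp add: field_simps)
  qed
  have zero: "pmf M (zip zs ss) = 0" if zs: "zs \<in> Lz" and ss: "ss \<in> Ls" and PZ0: "PZ zs = 0" for zs ss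
  proof -
    have "pmf M (zip zs ss) \<le> PZ zs"
      unfolding PZ_def measure_pmf_single[symmetric]
      using zs ss unfolding Lz_def Ls_def
      by (intro measure_pmf.finite_measure_mono) auto
    then show ?thesis using PZ0 pmf_nonneg[of M "zip zs ss"] by linarith
  qed
  have main_sum: "(\<Sum>xs\<in>L. (if xs \<in> A then pmf M xs else 0) * F xs)
      = (\<Sum>zs\<in>Lz. if emp_type zs = p then PZ zs * EE D zs (\<lambda>ss. F (zip zs ss)) else 0)" for F
  proof -
    have img: "L = (\<lambda>(zs,ss). zip zs ss) ` (Lz \<times> Ls)"
    proof
      show "L \<subseteq> (\<lambda>(zs,ss). zip zs ss) ` (Lz \<times> Ls)"
      proof
        fix xs assume "xs \<in> L"
        then show "xs \<in> (\<lambda>(zs,ss). zip zs ss) ` (Lz \<times> Ls)"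
          unfolding L_def Lz_def Ls_def
          by (intro image_eqI[of _ _ "(map fst xs, map snd xs)"]) (auto simp: zip_map_fst_snd)
      qed
    qed (auto simp: L_def Lz_def Ls_def)
    have inj: "inj_on (\<lambda>(zs,ss). zip zs ss) (Lz \<times> Ls)"
    proof (rule inj_onI, clarsimp)
      fix zs ss zs' ss'
      assume "zs \<in> Lz" "ss \<in> Ls" "zs' \<in> Lz" "ss' \<in> Ls" and e: "zip zs ss = zip zs' ss'"
      then have "map fst (zip zs ss) = map fst (zip zs' ss')" "map snd (zip zs ss) = map snd (zip zs' ss')"
        by auto
      then show "zs = zs' \<and> ss = ss'" using \<open>zs \<in> Lz\<close> \<open>ss \<in> Ls\<close> \<open>zs' \<in> Lz\<close> \<open>ss' \<in> Ls\<close>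
        unfolding Lz_def Ls_def by simp
    qed
    have "(\<Sum>xs\<in>L. (if xs \<in> A then pmf M xs else 0) * F xs)
        = (\<Sum>zs\<in>Lz. \<Sum>ss\<in>Ls. (if zip zs ss \<in> A then pmf M (zip zs ss) else 0) * F (zip zs ss))"
      unfolding img by (subst sum.reindex[OF inj]) (simp add: sum.cartesian_product case_prod_unfold)
    also have "\<dots> = (\<Sum>zs\<in>Lz. if emp_type zs = p then PZ zs * EE D zs (\<lambda>ss. F (zip zs ss)) else 0)"
    proof (rule sum.cong[OF refl])
      fix zs assume zs: "zs \<in> Lz"
      have inA: "zip zs ss \<in> A \<longleftrightarrow> emp_type zs = p" if "ss \<in> Ls" for ss
        using zs that unfolding A_def Lz_def Ls_def by simp
      show "(\<Sum>ss\<in>Ls. (if zip zs ss \<in> A then pmf M (zip zs ss) else 0) * F (zip zs ss))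
          = (if emp_type zs = p then PZ zs * EE D zs (\<lambda>ss. F (zip zs ss)) else 0)"
      proof (cases "emp_type zs = p")
        case False then show ?thesis using inA by simp
      next
        case True
        have Ls': "Ls = {ss. length ss = length zs}" using zs unfolding Ls_def Lz_def by simp
        show ?thesis
        proof (cases "PZ zs = 0")
          case True
          then show ?thesis using zero[OF zs] by (simp add: sum.neutral)
        next
          case False
          then have "PZ zs > 0" unfolding PZ_def by (simp add: zero_less_measure_iff)
          then show ?thesis using True inA fact[OF zs]
            unfolding EE_def Ls'[symmetric]
            by (simp add: sum_distrib_left mult.assoc)
        qed
      qed
    qed
    finally show ?thesis .
  qed
  have PA_sum: "PA = (\<Sum>xs\<in>L. (if xs \<in> A then pmf M xs else 0) * 1)"
  proof -
    have "PA = measure M (A \<inter> L)"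
    proof -
      have "A \<inter> L \<inter> set_pmf M = A \<inter> set_pmf M" using supp by auto
      then show ?thesis unfolding PA_def by (metis measure_Int_set_pmf)
    qed
    also have "\<dots> = sum (pmf M) (A \<inter> L)" using finL by (simp add: measure_measure_pmf_finite)
    also have "\<dots> = (\<Sum>xs\<in>L. (if xs \<in> A then pmf M xs else 0) * 1)"
      using sum.inter_restrict[OF finL, of "pmf M" A] by (simp add: Int_commute)
    finally show ?thesis .
  qed
  have integral_N: "measure_pmf.expectation N F = (\<Sum>xs\<in>L. (if xs \<in> A then pmf M xs else 0) * F xs) / PA" for F
  proof -
    have "measure_pmf.expectation N F = (\<Sum>xs\<in>L. F xs * pmf N xs)"
      using supp unfolding N_def by (intro integral_measure_pmf_real[OF finL]) (auto simp: neA)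
    also have "\<dots> = (\<Sum>xs\<in>L. (if xs \<in> A then pmf M xs else 0) * F xs / PA)"
      unfolding N_def PA_def by (intro sum.cong) (auto simp: pmf_cond[OF neA])
    finally show ?thesis by (simp add: sum_divide_distrib)
  qed
  have key: "measure_pmf.expectation N F = K"
    if H: "\<And>zs. zs \<in> Lz \<Longrightarrow> emp_type zs = p \<Longrightarrow> PZ zs > 0 \<Longrightarrow> EE D zs (\<lambda>ss. F (zip zs ss)) = K" for F K
  proof -
    have "(\<Sum>xs\<in>L. (if xs \<in> A then pmf M xs else 0) * F xs)
        = (\<Sum>zs\<in>Lz. if emp_type zs = p then PZ zs * EE D zs (\<lambda>ss. F (zip zs ss)) else 0)"
      by (rule main_sum)
    also have "\<dots> = (\<Sum>zs\<in>Lz. K * (if emp_type zs = p then PZ zs * EE D zs (\<lambda>ss. 1) else 0))"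
    proof (intro sum.cong refl)
      fix zs assume zs: "zs \<in> Lz"
      show "(if emp_type zs = p then PZ zs * EE D zs (\<lambda>ss. F (zip zs ss)) else 0)
          = K * (if emp_type zs = p then PZ zs * EE D zs (\<lambda>ss. 1) else 0)"
      proof (cases "PZ zs = 0")
        case False
        then have "PZ zs > 0" unfolding PZ_def by (simp add: zero_less_measure_iff)
        then show ?thesis using H[OF zs] by (simp add: EE_one)
      qed simp
    qed
    also have "\<dots> = K * PA"
      unfolding PA_sum main_sum sum_distrib_left ..
    finally show ?thesis using integral_N[of F] PApos by simp
  qed
  define m where "m a = (\<Sum>s\<in>UNIV. pmf (D a) s * f (a,s))" for a
  define h where "h a s = f (a,s) - m a" for a s
  define V where "V a = (\<Sum>s\<in>UNIV. pmf (D a) s * (h a s)^2)" for a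
  have cent: "(\<Sum>s\<in>UNIV. pmf (D a) s * h a s) = 0" for a
    unfolding h_def m_def by (simp add: right_diff_distrib sum_subtractf flip: sum_distrib_right)
      (simp add: sum_pmf_eq_1)
  define g where "g xs = (\<Sum>i<n. f (xs ! i))" for xs
  define c where "c = real n * (\<Sum>a\<in>UNIV. p a * m a)"
  have g_zip: "g (zip zs ss) = sum_list (map2 h zs ss) + c"
    if "zs \<in> Lz" "emp_type zs = p" "length ss = length zs" for zs ss
  proof -
    have lz: "length zs = n" using that unfolding Lz_def by simp
    have "g (zip zs ss) = sum_list (map f (zip zs ss))"
      unfolding g_def using sum_nth_map[of f "zip zs ss"] lz that(3) by simp
    also have "\<dots> = sum_list (map2 h zs ss) + sum_list (map m zs)"
      unfolding h_def by (rule sum_list_split[OF that(3)])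
    finally show ?thesis using sum_list_type[OF lz that(2)] unfolding c_def by simp
  qed
  have Eg: "measure_pmf.expectation N g = c"
  proof (rule key)
    fix zs assume zs: "zs \<in> Lz" "emp_type zs = p"
    have "EE D zs (\<lambda>ss. g (zip zs ss)) = EE D zs (\<lambda>ss. 1 * sum_list (map2 h zs ss) + c * 1)"
      unfolding EE_def by (intro sum.cong refl) (simp add: g_zip zs)
    also have "\<dots> = c" by (simp only: EE_lin EE_one EE_sum[OF cent])
    finally show "EE D zs (\<lambda>ss. g (zip zs ss)) = c" .
  qed
  have Evar: "measure_pmf.expectation N (\<lambda>xs. (g xs - c)^2) = real n * (\<Sum>a\<in>UNIV. p a * V a)"
  proof (rule key)
    fix zs assume zs: "zs \<in> Lz" "emp_type zs = p"
    have "EE D zs (\<lambda>ss. (g (zip zs ss) - c)^2) = EE D zs (\<lambda>ss. (sum_list (map2 h zs ss))^2)"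
      unfolding EE_def by (intro sum.cong refl) (simp add: g_zip zs)
    also have "\<dots> = sum_list (map V zs)" unfolding V_def by (rule EE_sq[OF cent])
    also have "\<dots> = real n * (\<Sum>a\<in>UNIV. p a * V a)"
      using zs sum_list_type[of zs n p V] unfolding Lz_def by simp
    finally show "EE D zs (\<lambda>ss. (g (zip zs ss) - c)^2) = real n * (\<Sum>a\<in>UNIV. p a * V a)" .
  qed
  have Vvar: "measure_pmf.variance (D a) (\<lambda>s. f (a, s)) = V a" for a
  proof -
    have em: "measure_pmf.expectation (D a) (\<lambda>s. f (a, s)) = m a"
      unfolding m_def by (subst integral_measure_pmf_real[of UNIV]) (auto simp: mult.commute)
    show ?thesis unfolding em V_def h_def
      by (subst integral_measure_pmf_real[of UNIV]) (auto simp: mult.commute)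
  qed
  show ?thesis
    using Evar Eg unfolding N_def A_def g_def D_def[symmetric] Vvar by simp
qed

end
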